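(* Let $X_1, X_2, \ldots, X_n$ be independent random variables, each uniformly distributed on $[-1,1]$, and fix $\varepsilon > 0$. For $0 \le t \le n$ and $z \in \mathbb{R}$, let $f_t(z) = 1$ if there exists $S \subseteq \{1,\dots,t\}$ with $\lvert z - \sum_{i \in S} X_i \rvert < \varepsilon$, and $f_t(z) = 0$ otherwise. Let $v_t = \frac{1}{2}\int_{-1}^{1} f_t(z)\,\mathrm{d}z$. Then for all $0 \le t < n$, $$\mathbb{E}\left[v_{t+1} \,\middle|\, X_1,\dots,X_t\right] \ge v_t\left[1 + \tfrac{1}{4}(1 - v_t)\right].$$
   Context: A value $z$ is called $\varepsilon$-approximated at time $t$ if some subset of the first $t$ variables sums to within distance strictly less than $\varepsilon$ of $z$; $f_t$ is the indicator of this event (so $f_0 = \mathbf{1}_{(-\varepsilon,\varepsilon)}$, the empty sum being $0$), and $v_t$ is the fraction of $[-1,1]$ that is $\varepsilon$-approximated at time $t$. *)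

theory Defs
  imports "HOL-Probability.Probability"
begin

definition approx_ind :: "real \<Rightarrow> (nat \<Rightarrow> real) \<Rightarrow> nat \<Rightarrow> real \<Rightarrow> real" where
  "approx_ind eps x t z =
     (if \<exists>S. S \<subseteq> {1..t} \<and> \<bar>z - (\<Sum>i\<in>S. x i)\<bar> < eps then 1 else 0)"

definition approx_frac :: "real \<Rightarrow> (nat \<Rightarrow> real) \<Rightarrow> nat \<Rightarrow> real" where
  "approx_frac eps x t = (1/2) * integral {-1..1} (approx_ind eps x t)"

definition gen_sigma :: "'a measure \<Rightarrow> (nat \<Rightarrow> 'a \<Rightarrow> real) \<Rightarrow> nat \<Rightarrow> 'a measure" where
  "gen_sigma M X t = sigma (space M)
     {X i -` A \<inter> space M | i A. i \<in> {1..t} \<and> A \<in> sets borel}"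

end

theory Submission
  imports Defs
begin


lemma approx_ind_alt:
  "approx_ind eps x T z = (if \<exists>S\<in>Pow {1..T}. \<bar>z - (\<Sum>i\<in>S. x i)\<bar> < eps then 1 else 0)"
  unfolding approx_ind_def by auto

lemma approx_ind_01: "approx_ind eps x T z = 0 \<or> approx_ind eps x T z = 1"
  unfolding approx_ind_def by auto

lemma approx_ind_meas:
  assumes "\<And>i. i \<in> {1..T} \<Longrightarrow> (\<lambda>w. x w i) \<in> borel_measurable N"
  shows "(\<lambda>p. approx_ind eps (x (fst p)) T (snd p)) \<in> borel_measurable (N \<Otimes>\<^sub>M lborel)"
proof -
  have [measurable]: "\<And>i. i \<in> {1..T} \<Longrightarrow> (\<lambda>w. x w i) \<in> borel_measurable N" by fact
  have "(\<lambda>p. approx_ind eps (x (fst p)) T (snd p)) = 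
    (\<lambda>p. if \<exists>S\<in>Pow {1..T}. \<bar>snd p - (\<Sum>i\<in>S. x (fst p) i)\<bar> < eps then 1 else 0)"
    by (simp add: approx_ind_alt)
  also have "\<dots> \<in> borel_measurable (N \<Otimes>\<^sub>M lborel)"
  proof (rule measurable_If)
    show "{p \<in> space (N \<Otimes>\<^sub>M lborel). \<exists>S\<in>Pow {1..T}. \<bar>snd p - (\<Sum>i\<in>S. x (fst p) i)\<bar> < eps}
       \<in> sets (N \<Otimes>\<^sub>M lborel)"
    proof -
      have "\<And>S. S \<in> Pow {1..T} \<Longrightarrow> Measurable.pred (N \<Otimes>\<^sub>M lborel) (\<lambda>p. \<bar>snd p - (\<Sum>i\<in>S. x (fst p) i)\<bar> < eps)"
      proof -
        fix S assume S: "S \<in> Pow {1..T}"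
        have "(\<lambda>p. (\<Sum>i\<in>S. x (fst p) i)) \<in> borel_measurable (N \<Otimes>\<^sub>M lborel)"
          using S by (intro borel_measurable_sum) (auto intro!: measurable_compose[OF measurable_fst] assms)
        then show "Measurable.pred (N \<Otimes>\<^sub>M lborel) (\<lambda>p. \<bar>snd p - (\<Sum>i\<in>S. x (fst p) i)\<bar> < eps)"
          by measurable
      qed
      then have "Measurable.pred (N \<Otimes>\<^sub>M lborel) (\<lambda>p. \<exists>S\<in>Pow {1..T}. \<bar>snd p - (\<Sum>i\<in>S. x (fst p) i)\<bar> < eps)"
        by (intro pred_intros_finite) auto
      then show ?thesis by (simp add: pred_def)
    qed
  qed auto
  finally show ?thesis .
qed



abbreviation II :: "real \<Rightarrow> real" where "II \<equiv> indicator {-1..1}"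

lemma integ_I:
  fixes f :: "real \<Rightarrow> real"
  assumes "f \<in> borel_measurable borel" "\<And>z. \<bar>f z\<bar> \<le> B"
  shows "integrable lborel (\<lambda>z. II z * f z)"
  using integrableI_bounded_set_indicator[of "{-1..1::real}" lborel f B] assms by auto

lemma integ_sq:
  fixes f :: "real \<times> real \<Rightarrow> real"
  assumes "f \<in> borel_measurable (lborel \<Otimes>\<^sub>M lborel)" "\<And>p. \<bar>f p\<bar> \<le> B"
    and "\<And>p. p \<notin> {-1..1} \<times> {-1..1} \<Longrightarrow> f p = 0"
  shows "integrable (lborel \<Otimes>\<^sub>M lborel) f"
proof (rule integrableI_bounded_set[where A="{-1..1} \<times> {-1..1}" and B=B])
  show "{-1..1::real} \<times> {-1..1::real} \<in> sets (lborel \<Otimes>\<^sub>M lborel)" by auto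
  show "emeasure (lborel \<Otimes>\<^sub>M lborel) ({-1..1::real} \<times> {-1..1::real}) < \<infinity>"
    by (simp add: lborel.emeasure_pair_measure_Times ennreal_mult_less_top)
qed (use assms in auto)

lemma approx_ind_borel: "approx_ind eps x T \<in> borel_measurable borel"
proof -
  have "\<And>S. Measurable.pred borel (\<lambda>z. \<bar>z - (\<Sum>i\<in>S. x i)\<bar> < eps)" by measurable
  then have "Measurable.pred borel (\<lambda>z. \<exists>S\<in>Pow {1..T}. \<bar>z - (\<Sum>i\<in>S. x i)\<bar> < eps)"
    by (intro pred_intros_finite) auto
  then show ?thesis unfolding approx_ind_alt[abs_def] by measurable
qed

lemma approx_ind_abs: "\<bar>approx_ind eps x T z\<bar> \<le> 1"
  unfolding approx_ind_def by auto

lemma approx_frac_lint: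
  "approx_frac eps x T = (1/2) * (\<integral>z. II z * approx_ind eps x T z \<partial>lborel)"
proof -
  have "set_integrable lborel {-1..1} (approx_ind eps x T)"
    unfolding set_integrable_def
    using integ_I[OF approx_ind_borel approx_ind_abs] by simp
  from set_borel_integral_eq_integral(2)[OF this] show ?thesis
    unfolding approx_frac_def set_lebesgue_integral_def by simp
qed



lemma approx_frac_meas:
  assumes "\<And>i. i \<in> {1..T} \<Longrightarrow> (\<lambda>w. x w i) \<in> borel_measurable N"
  shows "(\<lambda>w. approx_frac eps (x w) T) \<in> borel_measurable N"
proof -
  have m: "(\<lambda>p. approx_ind eps (x (fst p)) T (snd p)) \<in> borel_measurable (N \<Otimes>\<^sub>M lborel)"
    by (rule approx_ind_meas[OF assms])
  have "(\<lambda>p. II (snd p) * approx_ind eps (x (fst p)) T (snd p)) \<in> borel_measurable (N \<Otimes>\<^sub>M lborel)"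
    using m by measurable
  then have "(\<lambda>w. \<integral>z. II z * approx_ind eps (x w) T z \<partial>lborel) \<in> borel_measurable N"
    by (intro lborel.borel_measurable_lebesgue_integral) (simp add: case_prod_beta')
  then show ?thesis unfolding approx_frac_lint by measurable
qed

lemma integral_unif:
  fixes f :: "real \<Rightarrow> real"
  assumes [measurable]: "f \<in> borel_measurable borel"
  shows "integral\<^sup>L (uniform_measure lborel {-1..1}) f = (1/2) * (\<integral>y. II y * f y \<partial>lborel)"
proof -
  have "uniform_measure lborel {-1..1::real} = density lborel (\<lambda>x. ennreal (II x / 2))"
    unfolding uniform_measure_def
    by (intro density_cong) (auto split: split_indicator simp: divide_ennreal divide_ennreal_def)
  then have "integral\<^sup>L (uniform_measure lborel {-1..1}) f = (\<integral>y. (II y / 2) *\<^sub>R f y \<partial>lborel)"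
    by (simp add: integral_density)
  also have "\<dots> = (1/2) * (\<integral>y. II y * f y \<partial>lborel)"
    by (simp add: integral_mult_right_zero[symmetric] mult_ac)
  finally show ?thesis .
qed

lemma approx_ind_Suc:
  "approx_ind eps x (Suc t) z = max (approx_ind eps x t z) (approx_ind eps x t (z - x (Suc t)))"
proof -
  have "(\<exists>S. S \<subseteq> {1..Suc t} \<and> \<bar>z - (\<Sum>i\<in>S. x i)\<bar> < eps) \<longleftrightarrow>
        (\<exists>S. S \<subseteq> {1..t} \<and> \<bar>z - (\<Sum>i\<in>S. x i)\<bar> < eps) \<or>
        (\<exists>S. S \<subseteq> {1..t} \<and> \<bar>z - x (Suc t) - (\<Sum>i\<in>S. x i)\<bar> < eps)"
  proof
    assume "\<exists>S. S \<subseteq> {1..Suc t} \<and> \<bar>z - (\<Sum>i\<in>S. x i)\<bar> < eps"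
    then obtain S where S: "S \<subseteq> {1..Suc t}" "\<bar>z - (\<Sum>i\<in>S. x i)\<bar> < eps" by blast
    have fin: "finite S" using S(1) finite_subset by blast
    show "(\<exists>S. S \<subseteq> {1..t} \<and> \<bar>z - (\<Sum>i\<in>S. x i)\<bar> < eps) \<or>
        (\<exists>S. S \<subseteq> {1..t} \<and> \<bar>z - x (Suc t) - (\<Sum>i\<in>S. x i)\<bar> < eps)"
    proof (cases "Suc t \<in> S")
      case True
      have "(\<Sum>i\<in>S. x i) = x (Suc t) + (\<Sum>i\<in>S - {Suc t}. x i)"
        using fin True by (simp add: sum.remove)
      moreover have "S - {Suc t} \<subseteq> {1..t}" using S(1) by auto
      ultimately show ?thesis using S(2) by (intro disjI2 exI[of _ "S - {Suc t}"]) auto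
    next
      case False
      then have "S \<subseteq> {1..t}" using S(1) by (auto simp: le_Suc_eq)
      then show ?thesis using S(2) by blast
    qed
  next
    assume "(\<exists>S. S \<subseteq> {1..t} \<and> \<bar>z - (\<Sum>i\<in>S. x i)\<bar> < eps) \<or>
        (\<exists>S. S \<subseteq> {1..t} \<and> \<bar>z - x (Suc t) - (\<Sum>i\<in>S. x i)\<bar> < eps)"
    then show "\<exists>S. S \<subseteq> {1..Suc t} \<and> \<bar>z - (\<Sum>i\<in>S. x i)\<bar> < eps"
    proof
      assume "\<exists>S. S \<subseteq> {1..t} \<and> \<bar>z - (\<Sum>i\<in>S. x i)\<bar> < eps"
      then show ?thesis by (meson atLeastAtMost_iff le_SucI subset_iff)
    next
      assume "\<exists>S. S \<subseteq> {1..t} \<and> \<bar>z - x (Suc t) - (\<Sum>i\<in>S. x i)\<bar> < eps"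
      then obtain S where S: "S \<subseteq> {1..t}" "\<bar>z - x (Suc t) - (\<Sum>i\<in>S. x i)\<bar> < eps" by blast
      have fin: "finite S" using S(1) finite_subset by blast
      have nS: "Suc t \<notin> S" using S(1) by auto
      have "(\<Sum>i\<in>insert (Suc t) S. x i) = x (Suc t) + (\<Sum>i\<in>S. x i)"
        using fin nS by simp
      moreover have "insert (Suc t) S \<subseteq> {1..Suc t}" using S(1) by auto
      ultimately show ?thesis using S(2) by (intro exI[of _ "insert (Suc t) S"]) (auto simp: algebra_simps)
    qed
  qed
  then show ?thesis unfolding approx_ind_def by (auto simp: algebra_simps)
qed

lemma approx_ind_cong:
  assumes "\<And>i. i \<in> {1..t} \<Longrightarrow> x i = x' i"
  shows "approx_ind eps x t z = approx_ind eps x' t z"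
proof -
  have "\<And>S. S \<subseteq> {1..t} \<Longrightarrow> (\<Sum>i\<in>S. x i) = (\<Sum>i\<in>S. x' i)"
    using assms by (intro sum.cong) auto
  then show ?thesis unfolding approx_ind_def by (metis (no_types, lifting))
qed



lemma integ_sup:
  fixes f :: "real \<Rightarrow> real"
  assumes "f \<in> borel_measurable borel" "\<And>z. \<bar>f z\<bar> \<le> C" "\<And>z. z \<notin> {-1..1} \<Longrightarrow> f z = 0"
  shows "integrable lborel f"
  by (rule integrableI_bounded_set[where A="{-1..1}" and B=C]) (use assms in auto)

lemma II_prod: "II w * II (z - w) = indicator {max (-1) (z-1) .. min 1 (z+1)} w"
  by (auto split: split_indicator)

lemma K0:
  assumes "\<bar>z\<bar> \<le> 1"
  shows "(\<integral>w. II w * II (z - w) \<partial>lborel) = 2 - \<bar>z\<bar>"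
proof -
  have "(\<integral>w. II w * II (z - w) \<partial>lborel) = measure lborel {max (-1) (z-1) .. min 1 (z+1)}"
    unfolding II_prod by simp
  also have "\<dots> = min 1 (z+1) - max (-1) (z-1)"
    using assms by (subst measure_lborel_Icc) (auto simp: min_def max_def)
  also have "\<dots> = 2 - \<bar>z\<bar>" using assms by (auto simp: min_def max_def abs_if)
  finally show ?thesis .
qed

lemma K4:
  fixes c :: real
  assumes c: "0 \<le> c" "c \<le> 1"
  shows "(\<integral>z. II z * max 0 (\<bar>z\<bar> - c) \<partial>lborel) = (1 - c)^2"
proof -
  have eq: "\<And>z. II z * max 0 (\<bar>z\<bar> - c) = indicator {c..1} z *\<^sub>R (z - c) + indicator {-1..-c} z *\<^sub>R (- z - c)"
    using c by (auto split: split_indicator simp: abs_if max_def)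
  have i1: "(\<integral>z. indicator {c..1} z *\<^sub>R (z - c) \<partial>lborel) = (\<lambda>z. (z - c)^2/2) 1 - (\<lambda>z. (z - c)^2/2) c"
    by (rule integral_FTC_atLeastAtMost[where F="\<lambda>z. (z - c)^2/2"])
       (use c in \<open>auto intro!: derivative_eq_intros continuous_intros simp: has_real_derivative_iff_has_vector_derivative[symmetric] field_simps\<close>)
  have i2: "(\<integral>z. indicator {-1..-c} z *\<^sub>R (- z - c) \<partial>lborel) = (\<lambda>z. (-1) * (z + c)^2/2) (-c) - (\<lambda>z. (-1) * (z + c)^2/2) (-1)"
    by (rule integral_FTC_atLeastAtMost[where F="\<lambda>z. (-1) * (z + c)^2/2"])
       (use c in \<open>auto intro!: derivative_eq_intros continuous_intros simp: has_real_derivative_iff_has_vector_derivative[symmetric] field_simps\<close>)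
  have int1: "integrable lborel (\<lambda>z. indicator {c..1} z *\<^sub>R (z - c))"
    by (rule integrableI_bounded_set_indicator[where B=1]) (use c in auto)
  have int2: "integrable lborel (\<lambda>z. indicator {-1..-c} z *\<^sub>R (- z - c))"
    by (rule integrableI_bounded_set_indicator[where B=1]) (use c in auto)
  show ?thesis
    unfolding eq by (subst Bochner_Integration.integral_add[OF int1 int2], subst i1, subst i2) (simp add: power2_eq_square field_simps)
qed



lemma II_01: "0 \<le> II z" "II z \<le> 1"
  by (auto split: split_indicator)

lemma bnd_int:
  fixes p :: "real \<Rightarrow> real"
  assumes [measurable]: "p \<in> borel_measurable borel" and p: "\<And>w. 0 \<le> p w \<and> p w \<le> II w"
  shows "integrable lborel p"
proof (rule integ_sup[where C=1])
  fix z show "\<bar>p z\<bar> \<le> 1" using p[of z] II_01[of z] by linarith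
  show "z \<notin> {-1..1} \<Longrightarrow> p z = 0" using p[of z] by auto
qed simp

lemma bnd_mult:
  fixes f :: real
  assumes "0 \<le> p \<and> p \<le> II w" "0 \<le> f" "f \<le> 1"
  shows "0 \<le> p * f \<and> p * f \<le> II w"
  using assms mult_left_le[of f p] by auto



lemma K1:
  fixes p :: "real \<Rightarrow> real"
  assumes [measurable]: "p \<in> borel_measurable borel" and p: "\<And>w. 0 \<le> p w \<and> p w \<le> II w"
    and z: "\<bar>z\<bar> \<le> 1"
  shows "(\<integral>w. p w * II (z - w) \<partial>lborel) \<ge> (\<integral>w. p w \<partial>lborel) - \<bar>z\<bar>"
proof -
  have ip: "integrable lborel p" by (rule bnd_int) (use p in auto)
  have i1: "integrable lborel (\<lambda>w. p w * II (z - w))"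
    by (rule bnd_int) (measurable, rule bnd_mult[OF p II_01])
  have i2: "integrable lborel (\<lambda>w. II w * II (z - w))"
    by (rule bnd_int) (auto split: split_indicator)
  have i3: "integrable lborel (\<lambda>w. II w)"
    by (rule bnd_int) (auto split: split_indicator)
  have "(\<integral>w. p w \<partial>lborel) - \<bar>z\<bar> = (\<integral>w. p w \<partial>lborel) - (\<integral>w. II w \<partial>lborel) + (\<integral>w. II w * II (z - w) \<partial>lborel)"
    using K0[OF z] by simp
  also have "\<dots> = (\<integral>w. p w - II w + II w * II (z - w) \<partial>lborel)"
    using ip i2 i3 by simp
  also have "\<dots> \<le> (\<integral>w. p w * II (z - w) \<partial>lborel)"
  proof (rule integral_mono)
    show "integrable lborel (\<lambda>w. p w - II w + II w * II (z - w))" using ip i2 i3 by simp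
    show "integrable lborel (\<lambda>w. p w * II (z - w))" by (rule i1)
    fix w show "p w - II w + II w * II (z - w) \<le> p w * II (z - w)"
      using p[of w] by (auto split: split_indicator)
  qed
  finally show ?thesis .
qed

lemma K:
  fixes p q :: "real \<Rightarrow> real"
  assumes [measurable]: "p \<in> borel_measurable borel" "q \<in> borel_measurable borel"
    and p: "\<And>w. 0 \<le> p w \<and> p w \<le> II w" and q: "\<And>w. 0 \<le> q w \<and> q w \<le> II w"
    and Q1: "(\<integral>w. q w \<partial>lborel) \<le> 1"
    and PQ: "(\<integral>w. p w \<partial>lborel) + (\<integral>w. q w \<partial>lborel) = 2"
  shows "(\<integral>z. q z * (\<integral>w. p w * II (z - w) \<partial>lborel) \<partial>lborel)
          \<ge> (\<integral>w. p w \<partial>lborel) * (\<integral>w. q w \<partial>lborel) / 4"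
proof -
  define P where "P = (\<integral>w. p w \<partial>lborel)"
  define Q where "Q = (\<integral>w. q w \<partial>lborel)"
  define c where "c = 1 - Q / 2"
  define inner where "inner z = (\<integral>w. p w * II (z - w) \<partial>lborel)" for z
  have ip: "integrable lborel p" by (rule bnd_int) (use p in auto)
  have iq: "integrable lborel q" by (rule bnd_int) (use q in auto)
  have Q0: "0 \<le> Q" unfolding Q_def using q by (simp add: Bochner_Integration.integral_nonneg)
  have c01: "0 \<le> c" "c \<le> 1" using Q0 Q1 unfolding c_def Q_def by auto
  have im[measurable]: "inner \<in> borel_measurable borel"
  proof -
    have "(\<lambda>(z, w). p w * II (z - w)) \<in> borel_measurable (lborel \<Otimes>\<^sub>M lborel)" by measurable
    then have "(\<lambda>z. \<integral>w. p w * II (z - w) \<partial>lborel) \<in> borel_measurable lborel"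
      by (rule lborel.borel_measurable_lebesgue_integral)
    then show ?thesis unfolding inner_def[abs_def] by simp
  qed
  have inner_bnd: "\<bar>inner z\<bar> \<le> 2" for z
  proof -
    have i1: "integrable lborel (\<lambda>w. p w * II (z - w))"
      by (rule bnd_int) (measurable, rule bnd_mult[OF p II_01])
    have i3: "integrable lborel (\<lambda>w. II w)"
      by (rule bnd_int) (auto split: split_indicator)
    have "0 \<le> inner z" unfolding inner_def by (intro Bochner_Integration.integral_nonneg) (use bnd_mult[OF p II_01] in blast)
    moreover have "inner z \<le> (\<integral>w. II w \<partial>lborel)" unfolding inner_def
      by (rule integral_mono[OF i1 i3]) (use bnd_mult[OF p II_01] in blast)
    ultimately show ?thesis by simp
  qed
  have q1: "\<bar>q z\<bar> \<le> 1" for z using q[of z] II_01[of z] by linarith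
  have q0: "z \<notin> {-1..1} \<Longrightarrow> q z = 0" for z using q[of z] by auto
  have iqi: "integrable lborel (\<lambda>z. q z * inner z)"
  proof (rule integ_sup[where C=2])
    fix z show "\<bar>q z * inner z\<bar> \<le> 2"
      using mult_mono[OF q1[of z] inner_bnd[of z]] by (simp add: abs_mult)
  qed (use q0 in auto)
  have iqa: "integrable lborel (\<lambda>z. q z * \<bar>z\<bar>)"
  proof (rule integ_sup[where C=1])
    fix z show "\<bar>q z * \<bar>z\<bar>\<bar> \<le> 1"
      using q0[of z] q1[of z] by (cases "z \<in> {-1..1}") (auto simp: abs_mult intro: mult_le_one)
  qed (use q0 in auto)
  have iqPa: "integrable lborel (\<lambda>z. q z * (P - \<bar>z\<bar>))"
    using iq iqa by (simp add: right_diff_distrib)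
  have imax: "integrable lborel (\<lambda>z. II z * max 0 (\<bar>z\<bar> - c))"
    by (rule integ_sup[where C=1]) (use c01 in \<open>auto split: split_indicator\<close>)
  have "P * Q / 4 \<le> P * Q - (c * Q + (1 - c)^2)"
  proof -
    have hP: "P = 2 - Q" using PQ unfolding P_def Q_def by simp
    have "P * Q - (c * Q + (1 - c)^2) - P * Q / 4 = Q * (1 - Q) / 2"
      unfolding c_def hP by (simp add: power2_eq_square field_simps)
    moreover have "0 \<le> Q * (1 - Q)" using Q0 Q1 unfolding Q_def by simp
    ultimately show ?thesis by simp
  qed
  also have "\<dots> \<le> P * Q - (\<integral>z. q z * \<bar>z\<bar> \<partial>lborel)"
  proof -
    have "(\<integral>z. q z * \<bar>z\<bar> \<partial>lborel) \<le> (\<integral>z. c * q z + II z * max 0 (\<bar>z\<bar> - c) \<partial>lborel)"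
    proof (rule integral_mono[OF iqa])
      show "integrable lborel (\<lambda>z. c * q z + II z * max 0 (\<bar>z\<bar> - c))" using iq imax by simp
      fix z show "q z * \<bar>z\<bar> \<le> c * q z + II z * max 0 (\<bar>z\<bar> - c)"
      proof (cases "z \<in> {-1..1}")
        case True
        have "q z * (\<bar>z\<bar> - c) \<le> q z * max 0 (\<bar>z\<bar> - c)" using q[of z] by (intro mult_left_mono) auto
        also have "\<dots> \<le> 1 * max 0 (\<bar>z\<bar> - c)" using q[of z] True by (intro mult_right_mono) auto
        finally show ?thesis using True by (simp add: algebra_simps)
      next
        case False
        then have "q z = 0" using q[of z] by (simp add: antisym)
        then show ?thesis using False by simp
      qed
    qed
    also have "\<dots> = c * Q + (1 - c)^2"
      using iq imax K4[OF c01] unfolding Q_def by simp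
    finally show ?thesis by simp
  qed
  also have "\<dots> = (\<integral>z. q z * (P - \<bar>z\<bar>) \<partial>lborel)"
    using iq iqa unfolding Q_def by (simp add: right_diff_distrib mult.commute)
  also have "\<dots> \<le> (\<integral>z. q z * inner z \<partial>lborel)"
  proof (rule integral_mono[OF iqPa iqi])
    fix z show "q z * (P - \<bar>z\<bar>) \<le> q z * inner z"
    proof (cases "\<bar>z\<bar> \<le> 1")
      case True
      then show ?thesis using K1[OF assms(1) p True] q[of z] unfolding P_def inner_def
        by (intro mult_left_mono) auto
    next
      case False
      then have "q z = 0" using q0[of z] by (auto simp: abs_le_iff)
      then show ?thesis by simp
    qed
  qed
  finally show ?thesis unfolding inner_def P_def Q_def .
qed



lemma II_sym: "II (z - w) = II (w - z)"
  by (auto split: split_indicator)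

lemma Dsym:
  fixes p q :: "real \<Rightarrow> real"
  assumes [measurable]: "p \<in> borel_measurable borel" "q \<in> borel_measurable borel"
    and p: "\<And>w. 0 \<le> p w \<and> p w \<le> II w" and q: "\<And>w. 0 \<le> q w \<and> q w \<le> II w"
  shows "(\<integral>z. q z * (\<integral>w. p w * II (z - w) \<partial>lborel) \<partial>lborel)
       = (\<integral>w. p w * (\<integral>z. q z * II (w - z) \<partial>lborel) \<partial>lborel)"
proof -
  have int: "integrable (lborel \<Otimes>\<^sub>M lborel) (\<lambda>(z, w). q z * p w * II (z - w))"
  proof (rule integ_sq[where B=1])
    show "(\<lambda>(z, w). q z * p w * II (z - w)) \<in> borel_measurable (lborel \<Otimes>\<^sub>M lborel)" by measurable
    fix x :: "real \<times> real"
    obtain z w where x: "x = (z, w)" by (cases x)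
    have le: "q z \<le> 1" "p w \<le> 1" using q[of z] p[of w] II_01[of z] II_01[of w] by linarith+
    have "\<bar>q z * p w * II (z - w)\<bar> \<le> 1 * 1 * 1"
      unfolding abs_mult using q[of z] p[of w] II_01[of "z - w"] le
      by (intro mult_mono) auto
    then show "\<bar>(case x of (z, w) \<Rightarrow> q z * p w * II (z - w))\<bar> \<le> 1" using x by simp
    assume "x \<notin> {-1..1} \<times> {-1..1}"
    then have "q z = 0 \<or> p w = 0" using x q[of z] p[of w] by auto
    then show "(case x of (z, w) \<Rightarrow> q z * p w * II (z - w)) = 0" using x by auto
  qed
  have "(\<integral>z. q z * (\<integral>w. p w * II (z - w) \<partial>lborel) \<partial>lborel) = (\<integral>z. (\<integral>w. q z * p w * II (z - w) \<partial>lborel) \<partial>lborel)"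
    by (simp add: mult.assoc)
  also have "\<dots> = (\<integral>w. (\<integral>z. q z * p w * II (z - w) \<partial>lborel) \<partial>lborel)"
    using lborel_pair.Fubini_integral[OF int] by simp
  also have "\<dots> = (\<integral>w. p w * (\<integral>z. q z * II (w - z) \<partial>lborel) \<partial>lborel)"
    by (subst integral_mult_right_zero[symmetric]) (simp add: II_sym mult_ac)
  finally show ?thesis .
qed



lemma Core:
  fixes g :: "real \<Rightarrow> real"
  assumes gm[measurable]: "g \<in> borel_measurable borel" and g01: "\<And>z. g z = 0 \<or> g z = 1"
  shows "(1/2) * (\<integral>y. II y * ((1/2) * (\<integral>z. II z * max (g z) (g (z - y)) \<partial>lborel)) \<partial>lborel)
     \<ge> ((1/2) * (\<integral>z. II z * g z \<partial>lborel)) * (1 + (1/4) * (1 - (1/2) * (\<integral>z. II z * g z \<partial>lborel)))"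
proof -
  define a where "a z = II z * g z" for z
  define b where "b z = II z * (1 - g z)" for z
  have am[measurable]: "a \<in> borel_measurable borel" unfolding a_def[abs_def] by measurable
  have bm[measurable]: "b \<in> borel_measurable borel" unfolding b_def[abs_def] by measurable
  have a: "0 \<le> a z \<and> a z \<le> II z" for z unfolding a_def using g01[of z] II_01[of z] by auto
  have b: "0 \<le> b z \<and> b z \<le> II z" for z unfolding b_def using g01[of z] II_01[of z] by auto
  have ia: "integrable lborel a" by (rule bnd_int[OF am a])
  have ib: "integrable lborel b" by (rule bnd_int[OF bm b])
  have iI: "integrable lborel II" by (rule bnd_int) (auto simp: II_01)
  have intI: "(\<integral>z. II z \<partial>lborel) = 2" by simp
  define \<alpha> where "\<alpha> = (\<integral>z. a z \<partial>lborel)"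
  define \<beta> where "\<beta> = (\<integral>z. b z \<partial>lborel)"
  have ab: "\<alpha> + \<beta> = 2"
  proof -
    have "\<alpha> + \<beta> = (\<integral>z. a z + b z \<partial>lborel)" unfolding \<alpha>_def \<beta>_def using ia ib by simp
    also have "\<dots> = (\<integral>z. II z \<partial>lborel)" by (rule Bochner_Integration.integral_cong) (auto simp: a_def b_def algebra_simps)
    finally show ?thesis using intI by simp
  qed
  have \<alpha>0: "0 \<le> \<alpha>" unfolding \<alpha>_def using a by (intro Bochner_Integration.integral_nonneg) auto
  have \<beta>0: "0 \<le> \<beta>" unfolding \<beta>_def using b by (intro Bochner_Integration.integral_nonneg) auto
  define J where "J y = (\<integral>z. b z * g (z - y) \<partial>lborel)" for y
  have g1: "0 \<le> g z \<and> g z \<le> 1" for z using g01[of z] by auto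
  have Jm[measurable]: "J \<in> borel_measurable borel"
  proof -
    have "(\<lambda>(y, z). b z * g (z - y)) \<in> borel_measurable (lborel \<Otimes>\<^sub>M lborel)" by measurable
    then have "(\<lambda>y. \<integral>z. b z * g (z - y) \<partial>lborel) \<in> borel_measurable lborel"
      by (rule lborel.borel_measurable_lebesgue_integral)
    then show ?thesis unfolding J_def[abs_def] by simp
  qed
  have J2: "0 \<le> J y \<and> J y \<le> 2" for y
  proof -
    have i1: "integrable lborel (\<lambda>z. b z * g (z - y))"
      by (rule bnd_int) (measurable, rule bnd_mult[OF b g1[THEN conjunct1] g1[THEN conjunct2]])
    have "0 \<le> J y" unfolding J_def
      by (intro Bochner_Integration.integral_nonneg) (use bnd_mult[OF b g1[THEN conjunct1] g1[THEN conjunct2]] in blast)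
    moreover have "J y \<le> (\<integral>z. II z \<partial>lborel)" unfolding J_def
      by (rule integral_mono[OF i1 iI]) (use bnd_mult[OF b g1[THEN conjunct1] g1[THEN conjunct2]] in blast)
    ultimately show ?thesis using intI by simp
  qed
  have S1: "(\<integral>z. II z * max (g z) (g (z - y)) \<partial>lborel) = \<alpha> + J y" for y
  proof -
    have i1: "integrable lborel (\<lambda>z. b z * g (z - y))"
      by (rule bnd_int) (measurable, rule bnd_mult[OF b g1[THEN conjunct1] g1[THEN conjunct2]])
    have "(\<integral>z. II z * max (g z) (g (z - y)) \<partial>lborel) = (\<integral>z. a z + b z * g (z - y) \<partial>lborel)"
    proof (rule Bochner_Integration.integral_cong)
      fix z show "II z * max (g z) (g (z - y)) = a z + b z * g (z - y)"
        using g01[of z] g01[of "z - y"] by (auto simp: a_def b_def max_def)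
    qed simp
    also have "\<dots> = \<alpha> + J y" unfolding \<alpha>_def J_def using ia i1 by simp
    finally show ?thesis .
  qed
  have iIJ: "integrable lborel (\<lambda>y. II y * J y)"
  proof (rule integ_sup[where C=2])
    fix y show "\<bar>II y * J y\<bar> \<le> 2" using J2[of y] II_01[of y] mult_mono[of "II y" 1 "J y" 2] by (simp add: abs_mult)
  qed auto
  define D where "D = (\<integral>y. II y * J y \<partial>lborel)"
  have S2: "(1/2) * (\<integral>y. II y * ((1/2) * (\<integral>z. II z * max (g z) (g (z - y)) \<partial>lborel)) \<partial>lborel)
      = \<alpha> / 2 + D / 4"
  proof -
    have "(\<integral>y. II y * ((1/2) * (\<integral>z. II z * max (g z) (g (z - y)) \<partial>lborel)) \<partial>lborel)
        = (\<integral>y. (\<alpha>/2) * II y + (1/2) * (II y * J y) \<partial>lborel)"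
      unfolding S1 by (rule Bochner_Integration.integral_cong) (auto simp: algebra_simps)
    also have "\<dots> = \<alpha> + D / 2" unfolding D_def using iI iIJ intI by simp
    finally show ?thesis by simp
  qed
  define inner where "inner z = (\<integral>w. a w * II (z - w) \<partial>lborel)" for z
  have innerm[measurable]: "inner \<in> borel_measurable borel"
  proof -
    have "(\<lambda>(z, w). a w * II (z - w)) \<in> borel_measurable (lborel \<Otimes>\<^sub>M lborel)" by measurable
    then have "(\<lambda>z. \<integral>w. a w * II (z - w) \<partial>lborel) \<in> borel_measurable lborel"
      by (rule lborel.borel_measurable_lebesgue_integral)
    then show ?thesis unfolding inner_def[abs_def] by simp
  qed
  define L where "L z = (\<integral>y. II y * g (z - y) \<partial>lborel)" for z
  have Lm[measurable]: "L \<in> borel_measurable borel"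
  proof -
    have "(\<lambda>(z, y). II y * g (z - y)) \<in> borel_measurable (lborel \<Otimes>\<^sub>M lborel)" by measurable
    then have "(\<lambda>z. \<integral>y. II y * g (z - y) \<partial>lborel) \<in> borel_measurable lborel"
      by (rule lborel.borel_measurable_lebesgue_integral)
    then show ?thesis unfolding L_def[abs_def] by simp
  qed
  have L2: "0 \<le> L z \<and> L z \<le> 2" for z
  proof -
    have i1: "integrable lborel (\<lambda>y. II y * g (z - y))"
      by (rule bnd_int) (measurable, use g1 II_01 in \<open>auto intro: mult_left_le\<close>)
    have "0 \<le> L z" unfolding L_def
      by (intro Bochner_Integration.integral_nonneg) (use g1 II_01 in auto)
    moreover have "L z \<le> (\<integral>z. II z \<partial>lborel)" unfolding L_def
      by (rule integral_mono[OF i1 iI]) (use g1 II_01 in \<open>auto intro: mult_left_le\<close>)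
    ultimately show ?thesis using intI by simp
  qed
  have inner2: "0 \<le> inner z \<and> inner z \<le> 2" for z
  proof -
    have i1: "integrable lborel (\<lambda>w. a w * II (z - w))"
      by (rule bnd_int) (measurable, rule bnd_mult[OF a II_01])
    have "0 \<le> inner z" unfolding inner_def
      by (intro Bochner_Integration.integral_nonneg) (use bnd_mult[OF a II_01] in blast)
    moreover have "inner z \<le> (\<integral>z. II z \<partial>lborel)" unfolding inner_def
      by (rule integral_mono[OF i1 iI]) (use bnd_mult[OF a II_01] in blast)
    ultimately show ?thesis using intI by simp
  qed
  have b1: "\<bar>b z\<bar> \<le> 1" for z using b[of z] II_01[of z] by linarith
  have b0: "z \<notin> {-1..1} \<Longrightarrow> b z = 0" for z using b[of z] by auto
  have S3: "D = (\<integral>z. b z * L z \<partial>lborel)"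
  proof -
    have int: "integrable (lborel \<Otimes>\<^sub>M lborel) (\<lambda>(y, z). II y * b z * g (z - y))"
    proof (rule integ_sq[where B=1])
      show "(\<lambda>(y, z). II y * b z * g (z - y)) \<in> borel_measurable (lborel \<Otimes>\<^sub>M lborel)" by measurable
      fix x :: "real \<times> real"
      obtain y z where x: "x = (y, z)" by (cases x)
      have "\<bar>II y * b z * g (z - y)\<bar> \<le> 1 * 1 * 1"
        unfolding abs_mult using b1[of z] g1[of "z - y"] II_01[of y]
        by (intro mult_mono) auto
      then show "\<bar>(case x of (y, z) \<Rightarrow> II y * b z * g (z - y))\<bar> \<le> 1" using x by simp
      assume "x \<notin> {-1..1} \<times> {-1..1}"
      then have "II y = 0 \<or> b z = 0" using x b0[of z] by auto
      then show "(case x of (y, z) \<Rightarrow> II y * b z * g (z - y)) = 0" using x by auto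
    qed
    have "D = (\<integral>y. (\<integral>z. II y * b z * g (z - y) \<partial>lborel) \<partial>lborel)"
      unfolding D_def J_def by (simp add: mult.assoc)
    also have "\<dots> = (\<integral>z. (\<integral>y. II y * b z * g (z - y) \<partial>lborel) \<partial>lborel)"
      using lborel_pair.Fubini_integral[OF int] by simp
    also have "\<dots> = (\<integral>z. b z * L z \<partial>lborel)"
      unfolding L_def by (subst integral_mult_right_zero[symmetric]) (simp add: mult_ac)
    finally show ?thesis .
  qed
  have S4: "inner z \<le> L z" for z
  proof -
    have i1: "integrable lborel (\<lambda>y. II y * g (z - y))"
      by (rule bnd_int) (measurable, use g1 II_01 in \<open>auto intro: mult_left_le\<close>)
    have i2: "integrable lborel (\<lambda>y. II y * II (z - y) * g (z - y))"
    proof (rule bnd_int)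
      fix w
      have "0 \<le> II w * II (z - w) \<and> II w * II (z - w) \<le> II w"
        by (rule bnd_mult) (auto simp: II_01)
      then show "0 \<le> II w * II (z - w) * g (z - w) \<and> II w * II (z - w) * g (z - w) \<le> II w"
        by (rule bnd_mult) (use g1 in auto)
    qed measurable
    have "inner z = (\<integral>w. II (z + -1 * w) * II (z - (z + -1 * w)) * g (z - (z + -1 * w)) \<partial>lborel)"
      unfolding inner_def a_def by (rule Bochner_Integration.integral_cong) (auto simp: mult_ac)
    also have "\<dots> = (\<integral>y. II y * II (z - y) * g (z - y) \<partial>lborel)"
      using lborel_integral_real_affine[where c="-1" and t=z and f="\<lambda>y. II y * II (z - y) * g (z - y)"]
      by simp
    also have "\<dots> \<le> L z" unfolding L_def
    proof (rule integral_mono[OF i2 i1])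
      fix y
      have "II y * g (z - y) * II (z - y) \<le> II y * g (z - y)"
        by (rule mult_left_le) (use g1 II_01 in auto)
      then show "II y * II (z - y) * g (z - y) \<le> II y * g (z - y)" by (simp add: mult_ac)
    qed
    finally show ?thesis .
  qed
  have ibi: "integrable lborel (\<lambda>z. b z * inner z)"
  proof (rule integ_sup[where C=2])
    fix z show "\<bar>b z * inner z\<bar> \<le> 2"
      using mult_mono[of "\<bar>b z\<bar>" 1 "\<bar>inner z\<bar>" 2] b1[of z] inner2[of z] by (simp add: abs_mult)
  qed (use b0 in auto)
  have ibL: "integrable lborel (\<lambda>z. b z * L z)"
  proof (rule integ_sup[where C=2])
    fix z show "\<bar>b z * L z\<bar> \<le> 2"
      using mult_mono[of "\<bar>b z\<bar>" 1 "\<bar>L z\<bar>" 2] b1[of z] L2[of z] by (simp add: abs_mult)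
  qed (use b0 in auto)
  have D1: "(\<integral>z. b z * inner z \<partial>lborel) \<le> D"
    unfolding S3 by (rule integral_mono[OF ibi ibL]) (use b S4 in \<open>auto intro: mult_left_mono\<close>)
  have S5: "\<alpha> * \<beta> / 4 \<le> (\<integral>z. b z * inner z \<partial>lborel)"
  proof (cases "\<beta> \<le> 1")
    case True
    show ?thesis using K[OF am bm a b] True ab unfolding inner_def \<alpha>_def \<beta>_def by simp
  next
    case False
    then have "\<alpha> \<le> 1" using ab by simp
    then have "\<beta> * \<alpha> / 4 \<le> (\<integral>z. a z * (\<integral>w. b w * II (z - w) \<partial>lborel) \<partial>lborel)"
      using K[OF bm am b a] ab unfolding \<alpha>_def \<beta>_def by simp
    also have "\<dots> = (\<integral>z. b z * inner z \<partial>lborel)"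
      unfolding inner_def by (rule Dsym[OF am bm a b, symmetric])
    finally show ?thesis by (simp add: mult.commute)
  qed
  have "(\<integral>z. II z * g z \<partial>lborel) = \<alpha>" unfolding \<alpha>_def a_def ..
  moreover have "\<alpha> / 2 * (1 + 1/4 * (1 - \<alpha> / 2)) = \<alpha> / 2 + \<alpha> * \<beta> / 16"
  proof -
    have hb: "\<beta> = 2 - \<alpha>" using ab by simp
    show ?thesis unfolding hb by (simp add: field_simps)
  qed
  ultimately show ?thesis unfolding S2 using D1 S5 by simp
qed



lemma Pointwise:
  "integral\<^sup>L (uniform_measure lborel {-1..1}) (\<lambda>y. approx_frac eps (\<lambda>i. if i = Suc t then y else x i) (Suc t))
   \<ge> approx_frac eps x t * (1 + 1/4 * (1 - approx_frac eps x t))"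
proof -
  define g where "g = approx_ind eps x t"
  have gm: "g \<in> borel_measurable borel" unfolding g_def by (rule approx_ind_borel)
  have g01: "g z = 0 \<or> g z = 1" for z unfolding g_def by (rule approx_ind_01)
  have eq: "approx_frac eps (\<lambda>i. if i = Suc t then y else x i) (Suc t)
      = (1/2) * (\<integral>z. II z * max (g z) (g (z - y)) \<partial>lborel)" for y
  proof -
    have "approx_ind eps (\<lambda>i. if i = Suc t then y else x i) (Suc t) z = max (g z) (g (z - y))" for z
      unfolding approx_ind_Suc g_def
      by (subst (1 2) approx_ind_cong[where x' = x]) auto
    then show ?thesis unfolding approx_frac_lint by simp
  qed
  have m: "(\<lambda>y. approx_frac eps (\<lambda>i. if i = Suc t then y else x i) (Suc t)) \<in> borel_measurable borel"
    by (rule approx_frac_meas) auto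
  have A: "(\<integral>z. II z * g z \<partial>lborel) = 2 * approx_frac eps x t"
    unfolding approx_frac_lint g_def by simp
  have U: "integral\<^sup>L (uniform_measure lborel {-1..1}) (\<lambda>y. approx_frac eps (\<lambda>i. if i = Suc t then y else x i) (Suc t))
     = (1/2) * (\<integral>y. II y * ((1/2) * (\<integral>z. II z * max (g z) (g (z - y)) \<partial>lborel)) \<partial>lborel)"
    by (subst integral_unif[OF m]) (simp only: eq)
  show ?thesis unfolding U using Core[OF gm g01] unfolding A by simp
qed



lemma approx_frac_bnd: "0 \<le> approx_frac eps x t \<and> approx_frac eps x t \<le> 1"
proof -
  have i: "integrable lborel (\<lambda>z. II z * approx_ind eps x t z)"
    by (rule integ_I[OF approx_ind_borel approx_ind_abs])
  have iI: "integrable lborel II" by (rule bnd_int) (auto simp: II_01)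
  have "0 \<le> (\<integral>z. II z * approx_ind eps x t z \<partial>lborel)"
  proof (intro Bochner_Integration.integral_nonneg)
    fix z show "0 \<le> II z * approx_ind eps x t z"
      using approx_ind_01[of eps x t z] II_01[of z] by auto
  qed
  moreover have "(\<integral>z. II z * approx_ind eps x t z \<partial>lborel) \<le> (\<integral>z. II z \<partial>lborel)"
  proof (rule integral_mono[OF i iI])
    fix z show "II z * approx_ind eps x t z \<le> II z"
      using approx_ind_01[of eps x t z] II_01[of z] by auto
  qed
  ultimately show ?thesis unfolding approx_frac_lint by simp
qed

lemma gen_sigma_facts:
  assumes Xm: "\<And>i. i \<in> {1..t} \<Longrightarrow> X i \<in> borel_measurable M"
  shows "space (gen_sigma M X t) = space M"
    and "sets (gen_sigma M X t) = sigma_sets (space M) (\<Union>i\<in>{1..t}. {X i -` A \<inter> space M | A. A \<in> sets borel})"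
    and "subalgebra M (gen_sigma M X t)"
    and "\<And>i. i \<in> {1..t} \<Longrightarrow> X i \<in> borel_measurable (gen_sigma M X t)"
proof -
  define G where "G = {X i -` A \<inter> space M | i A. i \<in> {1..t} \<and> A \<in> sets borel}"
  have GP: "G \<subseteq> Pow (space M)" unfolding G_def by auto
  have GM: "G \<subseteq> sets M" unfolding G_def using Xm by auto
  have GU: "G = (\<Union>i\<in>{1..t}. {X i -` A \<inter> space M | A. A \<in> sets borel})" unfolding G_def by blast
  have gs: "gen_sigma M X t = sigma (space M) G" unfolding gen_sigma_def G_def ..
  show sp: "space (gen_sigma M X t) = space M" unfolding gs using GP by (simp add: space_measure_of)
  show st: "sets (gen_sigma M X t) = sigma_sets (space M) (\<Union>i\<in>{1..t}. {X i -` A \<inter> space M | A. A \<in> sets borel})"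
    unfolding gs GU[symmetric] using GP by (simp add: sets_measure_of)
  show "subalgebra M (gen_sigma M X t)"
    unfolding subalgebra_def using sp st GU GM sets.sigma_sets_subset[of G M] by auto
  fix i assume i: "i \<in> {1..t}"
  show "X i \<in> borel_measurable (gen_sigma M X t)"
  proof (rule measurableI)
    fix A :: "real set" assume "A \<in> sets borel"
    then have "X i -` A \<inter> space M \<in> G" unfolding G_def using i by auto
    then show "X i -` A \<inter> space (gen_sigma M X t) \<in> sets (gen_sigma M X t)"
      unfolding sp st GU[symmetric] by auto
  qed auto
qed



lemma indep_F:
  assumes P: "prob_space M"
    and Xm: "\<And>i. i \<in> {1..n} \<Longrightarrow> X i \<in> borel_measurable M"
    and ind: "prob_space.indep_vars M (\<lambda>_. borel) X {1..n}"
    and tn: "t < n"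
  shows "prob_space.indep_set M (sets (gen_sigma M X t)) (sigma_sets (space M) {X (Suc t) -` A \<inter> space M | A. A \<in> sets borel})"
proof -
  interpret prob_space M by (rule P)
  define E where "E i = {X i -` A \<inter> space M | A. A \<in> sets borel}" for i
  define I where "I b = (if b then {1..t} else {Suc t})" for b
  have Xt: "\<And>i. i \<in> {1..t} \<Longrightarrow> X i \<in> borel_measurable M" using Xm tn by auto
  note gf = gen_sigma_facts[of t X M, OF Xt]
  have ind1: "indep_sets E {1..n}" using ind unfolding indep_vars_def2 E_def by simp
  have "indep_sets (\<lambda>j. sigma_sets (space M) (\<Union>i\<in>I j. E i)) UNIV"
  proof (rule indep_sets_collect_sigma)
    show "indep_sets E (\<Union>j\<in>UNIV. I j)"
      by (rule indep_sets_mono_index[OF _ ind1]) (use tn in \<open>auto simp: I_def\<close>)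
    fix i j assume "j \<in> (UNIV::bool set)" "i \<in> I j"
    show "Int_stable (E i)"
    proof (rule Int_stableI)
      fix a b assume "a \<in> E i" "b \<in> E i"
      then obtain A B where "a = X i -` A \<inter> space M" "A \<in> sets borel" "b = X i -` B \<inter> space M" "B \<in> sets borel"
        unfolding E_def by auto
      then show "a \<inter> b \<in> E i" unfolding E_def by (intro CollectI exI[of _ "A \<inter> B"]) auto
    qed
  next
    show "disjoint_family_on I UNIV" unfolding disjoint_family_on_def I_def by auto
  qed
  then have "indep_set (sigma_sets (space M) (\<Union>i\<in>{1..t}. E i)) (sigma_sets (space M) (E (Suc t)))"
    unfolding indep_set_def
    by (rule indep_sets_cong[THEN iffD1, rotated -1]) (auto simp: I_def split: bool.split)
  then show ?thesis using gf(2) unfolding E_def by simp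
qed



theorem lemma2:
  fixes M :: "'a measure" and X :: "nat \<Rightarrow> 'a \<Rightarrow> real" and n t :: nat and eps :: real
  assumes "prob_space M"
    and "\<And>i. i \<in> {1..n} \<Longrightarrow> X i \<in> borel_measurable M"
    and "prob_space.indep_vars M (\<lambda>_. borel) X {1..n}"
    and "\<And>i. i \<in> {1..n} \<Longrightarrow> distr M lborel (X i) = uniform_measure lborel {-1..1}"
    and "eps > 0"
    and "t < n"
  shows "AE \<omega> in M.
           real_cond_exp M (gen_sigma M X t) (\<lambda>\<omega>. approx_frac eps (\<lambda>i. X i \<omega>) (Suc t)) \<omega>
         \<ge> approx_frac eps (\<lambda>i. X i \<omega>) t * (1 + (1/4) * (1 - approx_frac eps (\<lambda>i. X i \<omega>) t))"
proof -
  interpret prob_space M by fact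
  define F where "F = gen_sigma M X t"
  have Xt: "\<And>i. i \<in> {1..t} \<Longrightarrow> X i \<in> borel_measurable M" using assms(2,6) by auto
  note gf = gen_sigma_facts[of t X M, OF Xt, folded F_def]
  interpret FS: finite_measure_subalgebra M F
    by unfold_locales (rule gf(3))
  have XF[measurable]: "X i \<in> borel_measurable F" if "i \<in> {1..t}" for i using gf(4) that by blast
  define U where "U = uniform_measure lborel {-1..(1::real)}"
  interpret U: prob_space U unfolding U_def by (rule prob_space_uniform_measure) auto
  define Y where "Y = X (Suc t)"
  have Ym[measurable]: "Y \<in> borel_measurable M" unfolding Y_def using assms(2,6) by auto
  have MY: "distr M borel Y = U"
  proof -
    have "distr M borel Y = distr M lborel Y" by (rule distr_cong) auto
    also have "\<dots> = U" unfolding Y_def U_def using assms(4,6) by auto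
    finally show ?thesis .
  qed
  define Hf where "Hf p = approx_frac eps (\<lambda>i. if i = Suc t then snd p else X i (fst p)) (Suc t)" for p
  define W where "W \<omega> = (\<integral>y. Hf (\<omega>, y) \<partial>U)" for \<omega>
  define V' where "V' \<omega> = approx_frac eps (\<lambda>i. X i \<omega>) (Suc t)" for \<omega>
  have Hfm: "Hf \<in> borel_measurable (F \<Otimes>\<^sub>M borel)"
    unfolding Hf_def[abs_def]
  proof (rule approx_frac_meas)
    fix i assume i: "i \<in> {1..Suc t}"
    show "(\<lambda>p. if i = Suc t then snd p else X i (fst p)) \<in> borel_measurable (F \<Otimes>\<^sub>M borel)"
    proof (cases "i = Suc t")
      case False
      then have "i \<in> {1..t}" using i by auto
      then show ?thesis using False by measurable
    qed simp
  qed
  have Hfm': "Hf \<in> borel_measurable (F \<Otimes>\<^sub>M U)"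
  proof -
    have e: "sets (F \<Otimes>\<^sub>M U) = sets (F \<Otimes>\<^sub>M borel)"
      by (rule sets_pair_measure_cong) (auto simp: U_def)
    show ?thesis unfolding measurable_cong_sets[OF e refl] by (rule Hfm)
  qed
  have Wm: "W \<in> borel_measurable F"
  proof -
    have "(\<lambda>(\<omega>, y). Hf (\<omega>, y)) \<in> borel_measurable (F \<Otimes>\<^sub>M U)" using Hfm' by simp
    then show ?thesis unfolding W_def[abs_def] by (rule U.borel_measurable_lebesgue_integral)
  qed
  have HfU: "(\<lambda>y. Hf (\<omega>, y)) \<in> borel_measurable U" for \<omega>
  proof -
    have "(\<lambda>y. Hf (\<omega>, y)) \<in> borel_measurable borel"
      unfolding Hf_def
    proof (rule approx_frac_meas)
      fix i show "(\<lambda>y. if i = Suc t then snd (\<omega>, y) else X i (fst (\<omega>, y))) \<in> borel_measurable borel"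
        by (cases "i = Suc t") auto
    qed
    then show ?thesis unfolding U_def measurable_cong_sets[OF sets_uniform_measure refl] by simp
  qed
  have Hf01: "0 \<le> Hf p \<and> Hf p \<le> 1" for p unfolding Hf_def by (rule approx_frac_bnd)
  have W01: "0 \<le> W \<omega> \<and> W \<omega> \<le> 1" for \<omega>
  proof -
    have "0 \<le> W \<omega>" unfolding W_def using Hf01 by (intro Bochner_Integration.integral_nonneg) auto
    moreover have "W \<omega> \<le> (\<integral>y. 1 \<partial>U)" unfolding W_def
    proof (rule integral_mono)
      show "integrable U (\<lambda>y. Hf (\<omega>, y))"
        by (rule U.integrable_const_bound[where B=1]) (use Hf01 HfU in auto)
    qed (use Hf01 in auto)
    ultimately show ?thesis by (simp add: U.prob_space)
  qed
  have V'm: "V' \<in> borel_measurable M"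
    unfolding V'_def[abs_def] by (rule approx_frac_meas) (use assms(2,6) in auto)
  have iV': "integrable M V'"
    by (rule integrable_const_bound[where B=1]) (use V'm approx_frac_bnd in \<open>auto simp: V'_def\<close>)
  have WmM: "W \<in> borel_measurable M" by (rule measurable_from_subalg[OF gf(3) Wm])
  have iW: "integrable M W"
    by (rule integrable_const_bound[where B=1]) (use WmM W01 in auto)
  have idm: "(\<lambda>\<omega>. \<omega>) \<in> measurable M F" using gf(3) unfolding subalgebra_def by (intro measurableI) auto
  have pm: "(\<lambda>\<omega>. (\<omega>, Y \<omega>)) \<in> measurable M (F \<Otimes>\<^sub>M borel)" using idm Ym by (rule measurable_Pair)
  have indep: "indep_set (sets F) (sigma_sets (space M) {Y -` A \<inter> space M | A. A \<in> sets borel})"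
    unfolding Y_def F_def by (rule indep_F[OF assms(1,2,3,6)])
  interpret MF: prob_space "distr M F (\<lambda>\<omega>. \<omega>)" by (rule prob_space_distr[OF idm])
  have prod: "distr M F (\<lambda>\<omega>. \<omega>) \<Otimes>\<^sub>M U = distr M (F \<Otimes>\<^sub>M borel) (\<lambda>\<omega>. (\<omega>, Y \<omega>))"
  proof (rule pair_measure_eqI)
    show "sigma_finite_measure (distr M F (\<lambda>\<omega>. \<omega>))" by unfold_locales
    show "sigma_finite_measure U" by unfold_locales
    show "sets (distr M F (\<lambda>\<omega>. \<omega>) \<Otimes>\<^sub>M U) = sets (distr M (F \<Otimes>\<^sub>M borel) (\<lambda>\<omega>. (\<omega>, Y \<omega>)))"
      by (simp add: U_def cong: sets_pair_measure_cong)
    fix A B assume A: "A \<in> sets (distr M F (\<lambda>\<omega>. \<omega>))" and B: "B \<in> sets U"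
    have AF: "A \<in> sets F" using A by simp
    have AM: "A \<in> sets M" using AF gf(3) unfolding subalgebra_def by auto
    have AS: "A \<subseteq> space M" using sets.sets_into_space[OF AM] .
    have Bb: "B \<in> sets borel" using B by (simp add: U_def)
    have YB: "Y -` B \<inter> space M \<in> sigma_sets (space M) {Y -` A \<inter> space M | A. A \<in> sets borel}"
      using Bb by (intro sigma_sets.Basic) auto
    have "emeasure (distr M (F \<Otimes>\<^sub>M borel) (\<lambda>\<omega>. (\<omega>, Y \<omega>))) (A \<times> B)
        = emeasure M ((\<lambda>\<omega>. (\<omega>, Y \<omega>)) -` (A \<times> B) \<inter> space M)"
      using AF Bb by (intro emeasure_distr[OF pm]) auto
    also have "(\<lambda>\<omega>. (\<omega>, Y \<omega>)) -` (A \<times> B) \<inter> space M = A \<inter> (Y -` B \<inter> space M)" using AS by auto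
    also have "emeasure M (A \<inter> (Y -` B \<inter> space M)) = ennreal (prob A * prob (Y -` B \<inter> space M))"
      using indep_setD[OF indep AF YB] by (simp add: emeasure_eq_measure)
    also have "\<dots> = emeasure M A * emeasure M (Y -` B \<inter> space M)"
      by (simp add: emeasure_eq_measure ennreal_mult measure_nonneg)
    also have "emeasure M A = emeasure (distr M F (\<lambda>\<omega>. \<omega>)) A"
      using AF AS by (subst emeasure_distr[OF idm]) (auto simp: Int_absorb2)
    also have "emeasure M (Y -` B \<inter> space M) = emeasure U B"
      unfolding MY[symmetric] using Bb by (subst emeasure_distr) auto
    finally show "emeasure (distr M F (\<lambda>\<omega>. \<omega>)) A * emeasure U B
        = emeasure (distr M (F \<Otimes>\<^sub>M borel) (\<lambda>\<omega>. (\<omega>, Y \<omega>))) (A \<times> B)" by simp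
  qed
  interpret P: pair_prob_space "distr M F (\<lambda>\<omega>. \<omega>)" U ..
  have eqs: "sets (distr M F (\<lambda>\<omega>. \<omega>) \<Otimes>\<^sub>M U) = sets (F \<Otimes>\<^sub>M borel)"
    by (rule sets_pair_measure_cong) (auto simp: U_def)
  have key: "(\<integral>x\<in>A. V' x \<partial>M) = (\<integral>x\<in>A. W x \<partial>M)" if A: "A \<in> sets F" for A
  proof -
    define \<Phi> where "\<Phi> p = indicator A (fst p) * Hf p" for p
    have \<Phi>m: "\<Phi> \<in> borel_measurable (F \<Otimes>\<^sub>M borel)" unfolding \<Phi>_def[abs_def] using Hfm A by measurable
    have \<Phi>m': "\<Phi> \<in> borel_measurable (distr M F (\<lambda>\<omega>. \<omega>) \<Otimes>\<^sub>M U)"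
      unfolding measurable_cong_sets[OF eqs refl] by (rule \<Phi>m)
    have i\<Phi>: "integrable (distr M F (\<lambda>\<omega>. \<omega>) \<Otimes>\<^sub>M U) \<Phi>"
    proof (rule P.integrable_const_bound[where B=1])
      show "AE x in distr M F (\<lambda>\<omega>. \<omega>) \<Otimes>\<^sub>M U. norm (\<Phi> x) \<le> 1"
        using Hf01 by (auto simp: \<Phi>_def split: split_indicator)
    qed (rule \<Phi>m')
    have ev: "Hf (\<omega>, Y \<omega>) = V' \<omega>" for \<omega>
      unfolding Hf_def V'_def Y_def by (rule arg_cong[where f="\<lambda>x. approx_frac eps x (Suc t)"]) auto
    have "(\<integral>x\<in>A. V' x \<partial>M) = (\<integral>\<omega>. \<Phi> (\<omega>, Y \<omega>) \<partial>M)"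
      unfolding set_lebesgue_integral_def \<Phi>_def by (simp add: ev)
    also have "\<dots> = (\<integral>p. \<Phi> p \<partial>(distr M (F \<Otimes>\<^sub>M borel) (\<lambda>\<omega>. (\<omega>, Y \<omega>))))"
      by (rule integral_distr[OF pm \<Phi>m, symmetric])
    also have "\<dots> = (\<integral>p. \<Phi> p \<partial>(distr M F (\<lambda>\<omega>. \<omega>) \<Otimes>\<^sub>M U))" unfolding prod ..
    also have "\<dots> = (\<integral>\<omega>. (\<integral>y. \<Phi> (\<omega>, y) \<partial>U) \<partial>distr M F (\<lambda>\<omega>. \<omega>))"
      by (rule P.integral_fst'[OF i\<Phi>, symmetric])
    also have "\<dots> = (\<integral>\<omega>. indicator A \<omega> * W \<omega> \<partial>distr M F (\<lambda>\<omega>. \<omega>))"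
      unfolding \<Phi>_def W_def by simp
    also have "\<dots> = (\<integral>\<omega>. indicator A \<omega> * W \<omega> \<partial>M)"
      by (rule integral_distr[OF idm]) (use A Wm in measurable)
    also have "\<dots> = (\<integral>x\<in>A. W x \<partial>M)" unfolding set_lebesgue_integral_def by simp
    finally show ?thesis .
  qed
  have "AE \<omega> in M. real_cond_exp M F V' \<omega> = W \<omega>"
    by (rule FS.real_cond_exp_charact[OF key iV' iW Wm])
  moreover have "approx_frac eps (\<lambda>i. X i \<omega>) t * (1 + (1/4) * (1 - approx_frac eps (\<lambda>i. X i \<omega>) t)) \<le> W \<omega>" for \<omega>
    unfolding W_def U_def Hf_def fst_conv snd_conv using Pointwise[where eps=eps and t=t and x="\<lambda>i. X i \<omega>"] by simp
  ultimately show ?thesis unfolding F_def V'_def by auto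
qed

end
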